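(* Let $G$ be a simple graph on $n$ nodes with $m$ edges in which every node has degree at least $2$, let $\mathcal{B}$ be its non-backtracking matrix, $\mathcal{D}_{row}$ the diagonal matrix of row sums of $\mathcal{B}$, and $\mathcal{T}=\mathcal{D}_{row}^{-1}\mathcal{B}$. Let $\lambda\in\mathbb{C}\setminus\mathbb{R}$ be an eigenvalue of $\mathcal{T}$ and $z\in\mathbb{C}^{2m}$ a right eigenvector: $\mathcal{T}z=\lambda z$. Then $\overline{\breve z}$ is a left eigenvector of $\mathcal{T}$ with the same eigenvalue $\lambda$, i.e. $\mathcal{T}^*\,\overline{\breve z}=\bar\lambda\,\overline{\breve z}$.
   Context: Each edge $\{i,j\}$ of $G$ is considered in both orientations, giving the set $E^{\rightarrow}$ of $2m$ oriented edges. For an oriented edge $e=[i,j]$, $\mathrm{in}(e)=i$, $\mathrm{out}(e)=j$, and $e^{-1}=[j,i]$. The non-backtracking matrix $\mathcal{B}=(b_{ef})_{e,f\in E^{\rightarrow}}$ has $b_{ef}=1$ if $\mathrm{out}(e)=\mathrm{in}(f)$ and $f\neq e^{-1}$, else $0$. The diagonal entry of $\mathcal{D}_{row}$ at $e=[i,j]$ is $d_j-1$. For $x\in\mathbb{C}^{2m}$, $\breve x_e=x_{e^{-1}}$; the bar denotes entrywise complex conjugation and ${}^*$ the conjugate transpose. A vector $v$ is a left eigenvector of $A$ with eigenvalue $\lambda$ if $v^*A=\lambda v^*$. *)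

theory Defs
  imports Complex_Main
begin

definition simple_graph :: "'a set \<Rightarrow> ('a \<Rightarrow> 'a \<Rightarrow> bool) \<Rightarrow> bool" where
  "simple_graph V E \<longleftrightarrow> finite V \<and> (\<forall>i j. E i j \<longrightarrow> i \<in> V \<and> j \<in> V)
     \<and> (\<forall>i j. E i j \<longrightarrow> E j i) \<and> (\<forall>i. \<not> E i i)"

definition degree :: "'a set \<Rightarrow> ('a \<Rightarrow> 'a \<Rightarrow> bool) \<Rightarrow> 'a \<Rightarrow> nat" where
  "degree V E v = card {u \<in> V. E v u}"

text \<open>Oriented edges [i,j], represented as pairs (i,j); in e = fst e, out e = snd e.\<close>
definition oriented_edges :: "'a set \<Rightarrow> ('a \<Rightarrow> 'a \<Rightarrow> bool) \<Rightarrow> ('a \<times> 'a) set" where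
  "oriented_edges V E = {(i, j). i \<in> V \<and> j \<in> V \<and> E i j}"

definition rev_edge :: "'a \<times> 'a \<Rightarrow> 'a \<times> 'a" where
  "rev_edge e = (snd e, fst e)"

definition nb_matrix :: "('a \<times> 'a) \<Rightarrow> ('a \<times> 'a) \<Rightarrow> complex" where
  "nb_matrix e f = (if snd e = fst f \<and> f \<noteq> rev_edge e then 1 else 0)"

definition nb_rowsum :: "'a set \<Rightarrow> ('a \<Rightarrow> 'a \<Rightarrow> bool) \<Rightarrow> ('a \<times> 'a) \<Rightarrow> complex" where
  "nb_rowsum V E e = (\<Sum>f\<in>oriented_edges V E. nb_matrix e f)"

definition T_matrix :: "'a set \<Rightarrow> ('a \<Rightarrow> 'a \<Rightarrow> bool) \<Rightarrow> ('a \<times> 'a) \<Rightarrow> ('a \<times> 'a) \<Rightarrow> complex" where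
  "T_matrix V E e f = nb_matrix e f / nb_rowsum V E e"

definition mat_vec :: "('b set) \<Rightarrow> ('b \<Rightarrow> 'b \<Rightarrow> complex) \<Rightarrow> ('b \<Rightarrow> complex) \<Rightarrow> 'b \<Rightarrow> complex" where
  "mat_vec I M x e = (\<Sum>f\<in>I. M e f * x f)"

definition adj_mat_vec :: "('b set) \<Rightarrow> ('b \<Rightarrow> 'b \<Rightarrow> complex) \<Rightarrow> ('b \<Rightarrow> complex) \<Rightarrow> 'b \<Rightarrow> complex" where
  "adj_mat_vec I M x e = (\<Sum>f\<in>I. cnj (M f e) * x f)"

definition breve :: "('a \<times> 'a \<Rightarrow> complex) \<Rightarrow> 'a \<times> 'a \<Rightarrow> complex" where
  "breve x e = x (rev_edge e)"

end

theory Submission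
  imports Defs
begin

lemma rev_rev[simp]: "rev_edge (rev_edge e) = e"
  by (simp add: rev_edge_def)

lemma oe_rev: "simple_graph V E \<Longrightarrow> f \<in> oriented_edges V E \<Longrightarrow> rev_edge f \<in> oriented_edges V E"
  by (auto simp: oriented_edges_def rev_edge_def simple_graph_def)

lemma oe_finite: "simple_graph V E \<Longrightarrow> finite (oriented_edges V E)"
proof -
  assume "simple_graph V E"
  hence "finite (V \<times> V)" by (simp add: simple_graph_def)
  moreover have "oriented_edges V E \<subseteq> V \<times> V" by (auto simp: oriented_edges_def)
  ultimately show ?thesis by (rule rev_finite_subset)
qed

lemma cnj_nb[simp]: "cnj (nb_matrix e f) = nb_matrix e f"
  by (simp add: nb_matrix_def)

lemma cnj_rowsum[simp]: "cnj (nb_rowsum V E e) = nb_rowsum V E e"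
  by (simp add: nb_rowsum_def cnj_sum)

lemma cnj_T[simp]: "cnj (T_matrix V E e f) = T_matrix V E e f"
  by (simp add: T_matrix_def)

lemma rowsum_eq:
  assumes G: "simple_graph V E" and f: "f \<in> oriented_edges V E"
  shows "nb_rowsum V E f = of_nat (card {g\<in>oriented_edges V E. fst g = snd f}) - 1"
proof -
  let ?O = "oriented_edges V E"
  let ?A = "{g\<in>?O. fst g = snd f}"
  have fin: "finite ?O" using oe_finite[OF G] .
  have "nb_rowsum V E f = (\<Sum>g\<in>?O. if g \<in> ?A - {rev_edge f} then 1 else 0)"
    unfolding nb_rowsum_def nb_matrix_def by (rule sum.cong) auto
  also have "\<dots> = of_nat (card (?A - {rev_edge f}))"
    using fin by (subst sum.If_cases) (auto simp: Int_absorb1 intro!: arg_cong[where f=card])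
  also have "rev_edge f \<in> ?A" using oe_rev[OF G f] by (auto simp: rev_edge_def)
  hence "card (?A - {rev_edge f}) = card ?A - 1" by simp
  also have "card ?A \<ge> 1" using \<open>rev_edge f \<in> ?A\<close> fin
    by (metis (no_types, lifting) One_nat_def Suc_leI card_gt_0_iff empty_iff finite_subset mem_Collect_eq subsetI)
  hence "(of_nat (card ?A - 1) :: complex) = of_nat (card ?A) - 1" by (simp add: of_nat_diff)
  finally show ?thesis .
qed

lemma T_sym:
  assumes G: "simple_graph V E" and f: "f \<in> oriented_edges V E" and e: "e \<in> oriented_edges V E"
  shows "T_matrix V E f e = T_matrix V E (rev_edge e) (rev_edge f)"
proof (cases "snd f = fst e \<and> e \<noteq> rev_edge f")
  case True
  have "nb_rowsum V E f = nb_rowsum V E (rev_edge e)"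
    using rowsum_eq[OF G f] rowsum_eq[OF G oe_rev[OF G e]] True by (simp add: rev_edge_def)
  moreover have "nb_matrix f e = nb_matrix (rev_edge e) (rev_edge f)"
    using True by (auto simp: nb_matrix_def rev_edge_def)
  ultimately show ?thesis by (simp add: T_matrix_def)
next
  case False
  hence "nb_matrix f e = 0" "nb_matrix (rev_edge e) (rev_edge f) = 0"
    by (auto simp: nb_matrix_def rev_edge_def)
  thus ?thesis by (simp add: T_matrix_def)
qed

theorem mainTheorem3:
  fixes V :: "'a set" and E :: "'a \<Rightarrow> 'a \<Rightarrow> bool"
    and lam :: complex and z :: "'a \<times> 'a \<Rightarrow> complex"
  assumes "simple_graph V E"
    and "\<forall>v\<in>V. degree V E v \<ge> 2"
    and "lam \<notin> \<real>"
    and "\<exists>e\<in>oriented_edges V E. z e \<noteq> 0"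
    and "\<forall>e\<in>oriented_edges V E.
           mat_vec (oriented_edges V E) (T_matrix V E) z e = lam * z e"
  shows "\<forall>e\<in>oriented_edges V E.
           adj_mat_vec (oriented_edges V E) (T_matrix V E) (\<lambda>f. cnj (breve z f)) e
             = cnj lam * cnj (breve z e)"
proof
  fix e assume e: "e \<in> oriented_edges V E"
  let ?O = "oriented_edges V E"
  have G: "simple_graph V E" by fact
  have eig: "(\<Sum>g\<in>?O. T_matrix V E (rev_edge e) g * z g) = lam * z (rev_edge e)"
    using assms(5) oe_rev[OF G e] by (simp add: mat_vec_def)
  have bij: "bij_betw rev_edge ?O ?O"
    by (rule bij_betw_byWitness[where f'=rev_edge]) (auto intro: oe_rev[OF G])
  have "adj_mat_vec ?O (T_matrix V E) (\<lambda>f. cnj (breve z f)) e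
      = (\<Sum>f\<in>?O. T_matrix V E (rev_edge e) (rev_edge f) * cnj (z (rev_edge f)))"
    unfolding adj_mat_vec_def breve_def by (rule sum.cong) (auto simp: T_sym[OF G _ e])
  also have "\<dots> = (\<Sum>g\<in>?O. T_matrix V E (rev_edge e) g * cnj (z g))"
    using sum.reindex_bij_betw[OF bij, of "\<lambda>g. T_matrix V E (rev_edge e) g * cnj (z g)"] by simp
  also have "\<dots> = cnj (\<Sum>g\<in>?O. T_matrix V E (rev_edge e) g * z g)"
    by (simp add: cnj_sum)
  also have "\<dots> = cnj lam * cnj (breve z e)"
    by (simp add: eig breve_def)
  finally show "adj_mat_vec ?O (T_matrix V E) (\<lambda>f. cnj (breve z f)) e = cnj lam * cnj (breve z e)" .
qed

end
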